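(* Let $\mathbb{F}$ be a field of characteristic $\ne2$ and let $M$ be a fully symmetric $n^d\times n^d$ matrix over $\mathbb{F}$. Then $\mathrm{PT\text{-}rank}(M)\le 2^{d-1}\,\mathrm{SoS}(Q_M)$.
   Context: Rows and columns are indexed by $[n]^d$. For $k\in[d]$, $M^{\top_k}$ swaps the $k$-th row index with the $k$-th column index; $M^{\top_\kappa}$ composes these over $k\in\kappa$. $M$ is fully symmetric if $M^{\top_k}=M$ for all $k\in[d]$. $M$ is PT-basic if $\mathrm{rank}(M^{\top_\kappa})=1$ for some $\kappa\subseteq[d]$; $\mathrm{PT\text{-}rank}(M)$ is the least number of PT-basic matrices summing to $M$. $Q_M=\sum_{\vec i,\vec j\in[n]^d}M_{\vec i,\vec j}X^{(1)}_{i_1}X^{(1)}_{j_1}\cdots X^{(d)}_{i_d}X^{(d)}_{j_d}$ is a commutative polynomial in $d$ blocks of $n$ variables. $\mathrm{SoS}(f)$ is the least $s$ such that $f=g_1^2+\cdots+g_s^2$ with each $g_i$ a $d$-multilinear form over $\mathbb{F}$ (each monomial of $g_i$ has exactly one variable from each block), and $\infty$ if none exists. *)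

theory Defs
  imports Main "HOL-Library.Poly_Mapping" "HOL-Library.Function_Algebras" "HOL-Library.Extended_Nat"
begin

text \<open>Multi-indices in [n]^d, represented as lists of length d with entries < n
  (entries are 0-based, i.e. [n] = {0..<n}; blocks are also 0-based: k < d).\<close>
definition idx :: "nat \<Rightarrow> nat \<Rightarrow> nat list set" where
  "idx n d = {xs. length xs = d \<and> set xs \<subseteq> {..<n}}"

text \<open>A matrix with rows and columns indexed by [n]^d; only entries with
  indices in idx n d are relevant.\<close>
type_synonym 'a tmat = "nat list \<Rightarrow> nat list \<Rightarrow> 'a"

definition ptrans :: "nat set \<Rightarrow> 'a tmat \<Rightarrow> 'a tmat" where
  "ptrans \<kappa> M = (\<lambda>i j.
     M (map (\<lambda>k. if k \<in> \<kappa> then j ! k else i ! k) [0..<length i])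
       (map (\<lambda>k. if k \<in> \<kappa> then i ! k else j ! k) [0..<length j]))"

definition fully_symmetric :: "nat \<Rightarrow> nat \<Rightarrow> 'a tmat \<Rightarrow> bool" where
  "fully_symmetric n d M \<longleftrightarrow>
     (\<forall>k<d. \<forall>i\<in>idx n d. \<forall>j\<in>idx n d. ptrans {k} M i j = M i j)"

definition fscale :: "'a::field \<Rightarrow> ('b \<Rightarrow> 'a) \<Rightarrow> ('b \<Rightarrow> 'a)" where
  "fscale c f = (\<lambda>x. c * f x)"

lemma vector_space_fscale: "vector_space (fscale :: 'a::field \<Rightarrow> ('b \<Rightarrow> 'a) \<Rightarrow> _)"
  by unfold_locales (auto simp: fscale_def fun_eq_iff algebra_simps)

definition mrank :: "nat \<Rightarrow> nat \<Rightarrow> 'a::field tmat \<Rightarrow> nat" where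
  "mrank n d M = vector_space.dim (fscale :: 'a \<Rightarrow> (nat list \<Rightarrow> 'a) \<Rightarrow> _)
     ((\<lambda>j. (\<lambda>i. if i \<in> idx n d then M i j else 0)) ` idx n d)"

definition PT_basic :: "nat \<Rightarrow> nat \<Rightarrow> 'a::field tmat \<Rightarrow> bool" where
  "PT_basic n d M \<longleftrightarrow> (\<exists>\<kappa>\<subseteq>{..<d}. mrank n d (ptrans \<kappa> M) = 1)"

definition PT_rank :: "nat \<Rightarrow> nat \<Rightarrow> 'a::field tmat \<Rightarrow> enat" where
  "PT_rank n d M = Inf {enat r | r. \<exists>B :: nat \<Rightarrow> 'a tmat.
     (\<forall>t<r. PT_basic n d (B t)) \<and>
     (\<forall>i\<in>idx n d. \<forall>j\<in>idx n d. M i j = (\<Sum>t<r. B t i j))}"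

text \<open>Commutative polynomials in the variables X^(k)_i, encoded as (k, i), as
  finitely supported maps from monomials (finitely supported exponent maps) to coefficients.\<close>
type_synonym 'a mpoly = "((nat \<times> nat) \<Rightarrow>\<^sub>0 nat) \<Rightarrow>\<^sub>0 'a"

definition Var :: "nat \<Rightarrow> nat \<Rightarrow> 'a::comm_ring_1 mpoly" where
  "Var k i = Poly_Mapping.single (Poly_Mapping.single (k, i) 1) 1"

definition Const :: "'a::comm_ring_1 \<Rightarrow> 'a mpoly" where
  "Const c = Poly_Mapping.single 0 c"

definition QM :: "nat \<Rightarrow> nat \<Rightarrow> 'a::comm_ring_1 tmat \<Rightarrow> 'a mpoly" where
  "QM n d M = (\<Sum>i\<in>idx n d. \<Sum>j\<in>idx n d.
      Const (M i j) * (\<Prod>k<d. Var k (i ! k) * Var k (j ! k)))"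

definition multilinear_form :: "nat \<Rightarrow> nat \<Rightarrow> 'a::comm_ring_1 mpoly \<Rightarrow> bool" where
  "multilinear_form n d g \<longleftrightarrow>
     (\<exists>c :: nat list \<Rightarrow> 'a. g = (\<Sum>i\<in>idx n d. Const (c i) * (\<Prod>k<d. Var k (i ! k))))"

definition SoS :: "nat \<Rightarrow> nat \<Rightarrow> 'a::comm_ring_1 mpoly \<Rightarrow> enat" where
  "SoS n d f = Inf {enat s | s. \<exists>g :: nat \<Rightarrow> 'a mpoly.
     (\<forall>t<s. multilinear_form n d (g t)) \<and> f = (\<Sum>t<s. (g t)\<^sup>2)}"

end

theory Submission
  imports Defs
begin

definition sw :: "nat set \<Rightarrow> nat list \<Rightarrow> nat list \<Rightarrow> nat list" where
  "sw K i j = map (\<lambda>k. if k \<in> K then j ! k else i ! k) [0..<length i]"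

lemma ptrans_sw: "ptrans K M i j = M (sw K i j) (sw K j i)"
  by (simp add: ptrans_def sw_def)

lemma length_sw[simp]: "length (sw K i j) = length i"
  by (simp add: sw_def)

lemma nth_sw[simp]: "k < length i \<Longrightarrow> sw K i j ! k = (if k \<in> K then j ! k else i ! k)"
  by (simp add: sw_def)

lemma sw_idx: "i \<in> idx n d \<Longrightarrow> j \<in> idx n d \<Longrightarrow> sw K i j \<in> idx n d"
proof -
  assume i: "i \<in> idx n d" and j: "j \<in> idx n d"
  have li: "length i = d" and lj: "length j = d" and si: "set i \<subseteq> {..<n}" and sj: "set j \<subseteq> {..<n}"
    using i j by (auto simp: idx_def)
  have "set (sw K i j) \<subseteq> {..<n}"
  proof
    fix x assume "x \<in> set (sw K i j)"
    then obtain k where k: "k < length i" and x: "x = sw K i j ! k" by (auto simp: in_set_conv_nth)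
    show "x \<in> {..<n}"
    proof (cases "k \<in> K")
      case True
      then have "x = j ! k" using k x by simp
      moreover have "j ! k \<in> set j" using k li lj by simp
      ultimately show ?thesis using sj by blast
    next
      case False
      then have "x = i ! k" using k x by simp
      moreover have "i ! k \<in> set i" using k by simp
      ultimately show ?thesis using si by blast
    qed
  qed
  then show ?thesis using li by (simp add: idx_def)
qed

lemma sw_comp: "length i = length j \<Longrightarrow>
  sw L (sw K i j) (sw K j i) = sw ((K - L) \<union> (L - K)) i j"
  by (rule nth_equalityI) auto

lemma sw_empty[simp]: "sw {} i j = i"
  by (rule nth_equalityI) auto

lemma sw_compl: "length i = d \<Longrightarrow> length j = d \<Longrightarrow> sw ({..<d} - K) i j = sw K j i"
  by (rule nth_equalityI) auto

lemma ptrans_comp: "length i = length j \<Longrightarrow>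
  ptrans K (ptrans L N) i j = ptrans ((K - L) \<union> (L - K)) N i j"
  unfolding ptrans_sw by (simp add: sw_comp Un_commute)

definition expo :: "nat \<Rightarrow> nat list \<Rightarrow> nat list \<Rightarrow> (nat \<times> nat) \<Rightarrow>\<^sub>0 nat" where
  "expo d i j = (\<Sum>k<d. Poly_Mapping.single (k, i!k) 1 + Poly_Mapping.single (k, j!k) 1)"

lemma prod_single: "finite S \<Longrightarrow>
  (\<Prod>x\<in>S. Poly_Mapping.single (e x) (c x :: 'a::comm_semiring_1)) =
    Poly_Mapping.single (\<Sum>x\<in>S. e x) (\<Prod>x\<in>S. c x)"
  by (induct S rule: finite_induct) (auto simp: mult_single)

lemma mono_single: "(\<Prod>k<d. Var k (i ! k) * Var k (j ! k)) =
   (Poly_Mapping.single (expo d i j) (1::'a::comm_ring_1))"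
proof -
  have "(\<Prod>k<d. Var k (i ! k) * Var k (j ! k)) =
     (\<Prod>k<d. Poly_Mapping.single (Poly_Mapping.single (k, i!k) 1 + Poly_Mapping.single (k, j!k) 1) (1::'a))"
    by (simp add: Var_def mult_single)
  also have "\<dots> = Poly_Mapping.single (expo d i j) 1"
    by (simp add: prod_single expo_def)
  finally show ?thesis .
qed

lemma QM_single: "QM n d N = (\<Sum>i\<in>idx n d. \<Sum>j\<in>idx n d. Poly_Mapping.single (expo d i j) (N i j))"
  unfolding QM_def mono_single by (simp add: Const_def mult_single)

lemma lookup_QM: "Poly_Mapping.lookup (QM n d N) e =
   (\<Sum>i\<in>idx n d. \<Sum>j\<in>idx n d. if expo d i j = e then N i j else 0)"
  unfolding QM_single by (simp add: lookup_sum lookup_single when_def)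

lemma lookup_expo: "Poly_Mapping.lookup (expo d i j) (k, x) =
  (if k < d then (if i ! k = x then 1 else 0) + (if j ! k = x then 1 else 0) else 0)"
proof -
  have "Poly_Mapping.lookup (expo d i j) (k, x) =
    (\<Sum>k'<d. (if k' = k then (if i ! k = x then 1 else 0) else 0) + (if k' = k then (if j ! k = x then 1 else 0) else 0))"
    unfolding expo_def lookup_sum lookup_add lookup_single
    by (rule sum.cong) (auto simp: when_def)
  then show ?thesis by (simp add: sum.distrib)
qed

lemma finite_idx: "finite (idx n d)"
proof -
  have "idx n d = {xs. set xs \<subseteq> {..<n} \<and> length xs = d}" by (auto simp: idx_def)
  then show ?thesis using finite_lists_length_eq[of "{..<n}" d] by simp
qed

lemma length_idx: "i \<in> idx n d \<Longrightarrow> length i = d"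
  by (simp add: idx_def)

lemma ptrans_sym_aux: "finite K \<Longrightarrow> K \<subseteq> {..<d} \<Longrightarrow> fully_symmetric n d S \<Longrightarrow>
   \<forall>i\<in>idx n d. \<forall>j\<in>idx n d. ptrans K S i j = S i j"
proof (induct K rule: finite_induct)
  case empty
  then show ?case by (simp add: ptrans_sw)
next
  case (insert k K)
  show ?case
  proof (intro ballI)
    fix i j assume i: "i \<in> idx n d" and j: "j \<in> idx n d"
    have kd: "k < d" using insert by auto
    have "ptrans (insert k K) S i j = ptrans {k} (ptrans K S) i j"
      using ptrans_comp[of i j "{k}" K S] i j insert(2) by (simp add: length_idx insert_Diff_if Un_commute)
    also have "\<dots> = ptrans K S (sw {k} i j) (sw {k} j i)" by (simp add: ptrans_sw)
    also have "\<dots> = S (sw {k} i j) (sw {k} j i)" using insert i j sw_idx by auto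
    also have "\<dots> = ptrans {k} S i j" by (simp add: ptrans_sw)
    also have "\<dots> = S i j" using insert(5) kd i j unfolding fully_symmetric_def by blast
    finally show "ptrans (insert k K) S i j = S i j" .
  qed
qed

lemma ptrans_sym: "fully_symmetric n d S \<Longrightarrow> K \<subseteq> {..<d} \<Longrightarrow> i \<in> idx n d \<Longrightarrow> j \<in> idx n d \<Longrightarrow>
   ptrans K S i j = S i j"
  using ptrans_sym_aux[of K d n S] finite_subset[of K "{..<d}"] by auto

lemma expo_sw: "length i = d \<Longrightarrow> length j = d \<Longrightarrow> expo d (sw K i j) (sw K j i) = expo d i j"
  unfolding expo_def by (rule sum.cong) (auto simp: add.commute)

lemma QM_ptrans: "QM n d (ptrans K N) = QM n d N"
proof -
  let ?s = "\<lambda>(i,j). (sw K i j, sw K j i)"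
  have "QM n d (ptrans K N) = (\<Sum>(i,j)\<in>idx n d \<times> idx n d. Poly_Mapping.single (expo d i j) (N (sw K i j) (sw K j i)))"
    by (simp add: QM_single ptrans_sw sum.cartesian_product)
  also have "\<dots> = (\<Sum>(i,j)\<in>idx n d \<times> idx n d. Poly_Mapping.single (expo d i j) (N i j))"
    by (rule sum.reindex_bij_witness[of _ ?s ?s]) (auto simp: sw_comp sw_idx expo_sw length_idx)
  finally show ?thesis by (simp add: QM_single sum.cartesian_product)
qed

lemma two_ne_zero: "CHAR('a::field) \<noteq> 2 \<Longrightarrow> (2::'a) \<noteq> 0"
proof
  assume c: "CHAR('a) \<noteq> 2" and z: "(2::'a) = 0"
  have "of_nat 2 = (0::'a)" using z by simp
  then have dv: "CHAR('a) dvd 2" by (simp only: of_nat_eq_0_iff_char_dvd)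
  have n1: "CHAR('a) \<noteq> 1" by simp
  have "CHAR('a) \<le> 2" using dv by (simp add: dvd_imp_le)
  then have "CHAR('a) < 2" using c by linarith
  then have "CHAR('a) = 0" using n1 by linarith
  then show False using dv by simp
qed

lemma pair_aux:
  fixes a b x y :: nat
  assumes h: "\<And>z. (if a = z then 1 else 0) + (if b = z then 1 else 0) =
     ((if x = z then 1 else 0) + (if y = z then 1 else 0) :: nat)"
  shows "(a = x \<and> b = y) \<or> (a = y \<and> b = x)"
proof (cases "a = x")
  case ax: True
  show ?thesis
  proof (cases "b = y")
    case True with ax show ?thesis by simp
  next
    case False
    have hb: "(if a = b then 1 else 0) + 1 = ((if x = b then 1 else 0) + (if y = b then 1 else 0) :: nat)"
      using h[of b] by simp
    then have "x = b" using False by (simp split: if_split_asm)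
    then have "a = b" using ax by simp
    have ha: "2 = ((if x = a then 1 else 0) + (if y = a then 1 else 0) :: nat)"
      using h[of a] \<open>a = b\<close> by simp
    then have "y = a" by (simp split: if_split_asm)
    then show ?thesis using \<open>a = b\<close> ax by simp
  qed
next
  case nax: False
  have "1 + (if b = a then 1 else 0) = ((if x = a then 1 else 0) + (if y = a then 1 else 0) :: nat)"
    using h[of a] by simp
  then have ay: "y = a" using nax by (simp split: if_split_asm)
  have "(if a = x then 1 else 0) + (if b = x then 1 else 0) = (1 + (if y = x then 1 else 0) :: nat)"
    using h[of x] by simp
  then have "b = x" using nax by (simp split: if_split_asm)
  then show ?thesis using ay by simp
qed

lemma pair_of_expo:
  assumes e: "expo d a b = expo d i j" and k: "k < d"
  shows "(a!k = i!k \<and> b!k = j!k) \<or> (a!k = j!k \<and> b!k = i!k)"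
proof (rule pair_aux)
  fix x
  show "(if a ! k = x then 1 else 0) + (if b ! k = x then 1 else 0) =
     ((if i ! k = x then 1 else 0) + (if j ! k = x then 1 else 0) :: nat)"
    using arg_cong[OF e, of "\<lambda>p. Poly_Mapping.lookup p (k, x)"] k by (simp only: lookup_expo if_True)
qed

lemma E_image:
  assumes i: "i \<in> idx n d" and j: "j \<in> idx n d"
  shows "{p \<in> idx n d \<times> idx n d. expo d (fst p) (snd p) = expo d i j} =
     (\<lambda>K. (sw K i j, sw K j i)) ` Pow {k. k < d \<and> i!k \<noteq> j!k}"
proof
  show "(\<lambda>K. (sw K i j, sw K j i)) ` Pow {k. k < d \<and> i!k \<noteq> j!k}
     \<subseteq> {p \<in> idx n d \<times> idx n d. expo d (fst p) (snd p) = expo d i j}"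
    using i j by (auto simp: sw_idx expo_sw length_idx)
next
  show "{p \<in> idx n d \<times> idx n d. expo d (fst p) (snd p) = expo d i j}
     \<subseteq> (\<lambda>K. (sw K i j, sw K j i)) ` Pow {k. k < d \<and> i!k \<noteq> j!k}"
  proof
    fix p assume p: "p \<in> {p \<in> idx n d \<times> idx n d. expo d (fst p) (snd p) = expo d i j}"
    obtain a b where ab: "p = (a, b)" by (cases p)
    have a: "a \<in> idx n d" and b: "b \<in> idx n d" and e: "expo d a b = expo d i j" using p ab by auto
    define K where "K = {k. k < d \<and> i!k \<noteq> j!k \<and> a!k \<noteq> i!k}"
    have P: "\<And>k. k < d \<Longrightarrow> (a!k = i!k \<and> b!k = j!k) \<or> (a!k = j!k \<and> b!k = i!k)"
      by (rule pair_of_expo[OF e])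
    have la: "length a = d" and lb: "length b = d" and li: "length i = d" and lj: "length j = d"
      using a b i j by (auto simp: length_idx)
    have "a = sw K i j"
    proof (rule nth_equalityI)
      show "length a = length (sw K i j)" using la li by simp
      fix k assume "k < length a"
      then have k: "k < d" using la by simp
      then show "a ! k = sw K i j ! k" using P[OF k] li by (auto simp: K_def)
    qed
    moreover have "b = sw K j i"
    proof (rule nth_equalityI)
      show "length b = length (sw K j i)" using lb lj by simp
      fix k assume "k < length b"
      then have k: "k < d" using lb by simp
      then show "b ! k = sw K j i ! k" using P[OF k] lj by (auto simp: K_def)
    qed
    moreover have "K \<in> Pow {k. k < d \<and> i!k \<noteq> j!k}" by (auto simp: K_def)
    ultimately show "p \<in> (\<lambda>K. (sw K i j, sw K j i)) ` Pow {k. k < d \<and> i!k \<noteq> j!k}"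
      using ab by blast
  qed
qed

lemma inj_sw:
  assumes li: "length i = d" and lj: "length j = d"
  shows "inj_on (\<lambda>K. (sw K i j, sw K j i)) (Pow {k. k < d \<and> i!k \<noteq> j!k})"
proof (rule inj_onI)
  fix K1 K2 assume K1: "K1 \<in> Pow {k. k < d \<and> i!k \<noteq> j!k}" and K2: "K2 \<in> Pow {k. k < d \<and> i!k \<noteq> j!k}"
    and eq: "(sw K1 i j, sw K1 j i) = (sw K2 i j, sw K2 j i)"
  have h: "\<And>k. k < d \<Longrightarrow> (if k \<in> K1 then j ! k else i ! k) = (if k \<in> K2 then j ! k else i ! k)"
    using eq li by (metis nth_sw prod.inject)
  show "K1 = K2"
  proof (intro set_eqI iffI)
    fix k assume "k \<in> K1" then show "k \<in> K2" using K1 h[of k] by (auto split: if_splits)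
  next
    fix k assume "k \<in> K2" then show "k \<in> K1" using K2 h[of k] by (auto split: if_splits)
  qed
qed

lemma QM_inj:
  fixes S :: "'a::field tmat"
  assumes fs: "fully_symmetric n d S" and Q: "QM n d S = 0" and two: "(2::'a) \<noteq> 0"
    and i: "i \<in> idx n d" and j: "j \<in> idx n d"
  shows "S i j = 0"
proof -
  let ?D = "{k. k < d \<and> i!k \<noteq> j!k}"
  let ?E = "{p \<in> idx n d \<times> idx n d. expo d (fst p) (snd p) = expo d i j}"
  have "0 = Poly_Mapping.lookup (QM n d S) (expo d i j)" using Q by simp
  also have "\<dots> = (\<Sum>p\<in>idx n d \<times> idx n d. if expo d (fst p) (snd p) = expo d i j then S (fst p) (snd p) else 0)"
    by (simp add: lookup_QM sum.cartesian_product case_prod_beta)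
  also have "\<dots> = (\<Sum>p\<in>?E. S (fst p) (snd p))"
    by (rule sum.inter_filter[symmetric]) (simp add: finite_idx)
  also have "\<dots> = (\<Sum>p\<in>?E. S i j)"
  proof (rule sum.cong[OF refl])
    fix p assume "p \<in> ?E"
    then obtain K where K: "K \<subseteq> ?D" and pK: "p = (sw K i j, sw K j i)"
      unfolding E_image[OF i j] by auto
    have "S (fst p) (snd p) = ptrans K S i j" by (simp add: pK ptrans_sw)
    also have "\<dots> = S i j" using ptrans_sym[OF fs _ i j, of K] K by auto
    finally show "S (fst p) (snd p) = S i j" .
  qed
  also have "\<dots> = of_nat (card ?E) * S i j" by simp
  also have "card ?E = 2 ^ card ?D"
    unfolding E_image[OF i j]
    using card_image[OF inj_sw[OF length_idx[OF i] length_idx[OF j]]] card_Pow[of ?D] by simp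
  finally have "(2::'a) ^ card ?D * S i j = 0" by simp
  then show ?thesis using two by simp
qed

lemma single_sum: "finite P \<Longrightarrow> Poly_Mapping.single e (\<Sum>x\<in>P. f x) = (\<Sum>x\<in>P. Poly_Mapping.single e (f x))"
  by (induct P rule: finite_induct) (auto simp: single_add)

lemma QM_diff: "QM n d (\<lambda>i j. A i j - B i j) = QM n d A - QM n d B"
  by (simp add: QM_single single_diff sum_subtractf)

lemma QM_scale: "QM n d (\<lambda>i j. c * A i j) = Const c * QM n d A"
  by (simp add: QM_single Const_def sum_distrib_left mult_single)

lemma QM_sum:
  assumes P: "finite P"
  shows "QM n d (\<lambda>i j. \<Sum>x\<in>P. F x i j) = (\<Sum>x\<in>P. QM n d (F x))"
proof -
  have "QM n d (\<lambda>i j. \<Sum>x\<in>P. F x i j) =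
     (\<Sum>i\<in>idx n d. \<Sum>j\<in>idx n d. \<Sum>x\<in>P. Poly_Mapping.single (expo d i j) (F x i j))"
    by (simp add: QM_single single_sum[OF P])
  also have "\<dots> = (\<Sum>i\<in>idx n d. \<Sum>x\<in>P. \<Sum>j\<in>idx n d. Poly_Mapping.single (expo d i j) (F x i j))"
    by (rule sum.cong[OF refl], rule sum.swap)
  also have "\<dots> = (\<Sum>x\<in>P. \<Sum>i\<in>idx n d. \<Sum>j\<in>idx n d. Poly_Mapping.single (expo d i j) (F x i j))"
    by (rule sum.swap)
  finally show ?thesis by (simp add: QM_single)
qed

lemma sym_formula:
  fixes M N :: "'a::field tmat"
  assumes fs: "fully_symmetric n d M" and Q: "QM n d M = QM n d N" and two: "(2::'a) \<noteq> 0"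
    and i: "i \<in> idx n d" and j: "j \<in> idx n d"
  shows "of_nat (2^d) * M i j = (\<Sum>K\<in>Pow {..<d}. ptrans K N i j)"
proof -
  define S where "S = (\<lambda>i j. of_nat (2^d) * M i j - (\<Sum>K\<in>Pow {..<d}. ptrans K N i j))"
  have fP: "finite (Pow {..<d::nat})" by simp
  have "QM n d S = Const (of_nat (2^d)) * QM n d M - (\<Sum>K\<in>Pow {..<d}. QM n d (ptrans K N))"
    unfolding S_def QM_diff QM_scale QM_sum[OF fP] ..
  also have "\<dots> = 0"
  proof -
    have c2: "Poly_Mapping.single 0 (of_nat (2^d) :: 'a) = (of_nat (2^d) :: 'a mpoly)" by (rule single_of_nat)
    show ?thesis by (simp only: QM_ptrans Q Const_def c2 sum_constant) (simp add: card_Pow)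
  qed
  finally have QS: "QM n d S = 0" .
  have fsS: "fully_symmetric n d S"
    unfolding fully_symmetric_def
  proof (intro allI impI ballI)
    fix k i j assume k: "k < d" and i: "i \<in> idx n d" and j: "j \<in> idx n d"
    have li: "length i = length j" using i j by (simp add: length_idx)
    have m: "ptrans {k} M i j = M i j" using fs k i j by (simp add: fully_symmetric_def)
    have "(\<Sum>K\<in>Pow {..<d}. ptrans {k} (ptrans K N) i j) = (\<Sum>K\<in>Pow {..<d}. ptrans (({k} - K) \<union> (K - {k})) N i j)"
      by (rule sum.cong[OF refl]) (rule ptrans_comp[OF li])
    also have "\<dots> = (\<Sum>K\<in>Pow {..<d}. ptrans K N i j)"
      by (rule sum.reindex_bij_witness[of _ "\<lambda>K. ({k} - K) \<union> (K - {k})" "\<lambda>K. ({k} - K) \<union> (K - {k})"]) (use k in auto)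
    finally have s: "(\<Sum>K\<in>Pow {..<d}. ptrans {k} (ptrans K N) i j) = (\<Sum>K\<in>Pow {..<d}. ptrans K N i j)" .
    have "ptrans {k} S i j = of_nat (2^d) * ptrans {k} M i j - (\<Sum>K\<in>Pow {..<d}. ptrans {k} (ptrans K N) i j)"
      by (simp add: S_def ptrans_sw)
    also have "\<dots> = S i j" by (simp add: m s S_def)
    finally show "ptrans {k} S i j = S i j" .
  qed
  have "S i j = 0" by (rule QM_inj[OF fsS QS two i j])
  then show ?thesis by (simp add: S_def)
qed

lemma halve:
  fixes C :: "'a::comm_ring_1 tmat"
  assumes sym: "\<And>i j. C i j = C j i" and li: "length i = d" and lj: "length j = d" and d1: "d \<ge> 1"
  shows "(\<Sum>K\<in>Pow {..<d}. ptrans K C i j) = 2 * (\<Sum>K\<in>Pow {1..<d}. ptrans K C i j)"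
proof -
  let ?A = "{1..<d}"
  have P: "Pow {..<d} = Pow ?A \<union> insert 0 ` Pow ?A"
  proof
    show "Pow {..<d} \<subseteq> Pow ?A \<union> insert 0 ` Pow ?A"
    proof
      fix X assume X: "X \<in> Pow {..<d}"
      show "X \<in> Pow ?A \<union> insert 0 ` Pow ?A"
      proof (cases "0 \<in> X")
        case True
        then have "X = insert 0 (X - {0})" by auto
        moreover have "X - {0} \<in> Pow ?A" using X by auto
        ultimately show ?thesis by blast
      next
        case False
        have "X \<subseteq> ?A"
        proof
          fix x assume x: "x \<in> X"
          then have "x < d" using X by auto
          moreover have "x \<noteq> 0" using False x by (cases x) auto
          ultimately show "x \<in> ?A" by simp
        qed
        then show ?thesis by blast
      qed
    qed
  next
    show "Pow ?A \<union> insert 0 ` Pow ?A \<subseteq> Pow {..<d}" using d1 by auto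
  qed
  have disj: "Pow ?A \<inter> insert 0 ` Pow ?A = {}" by auto
  have inj: "inj_on (insert 0) (Pow ?A)"
  proof (rule inj_onI)
    fix X Y assume "X \<in> Pow ?A" "Y \<in> Pow ?A" "insert 0 X = insert (0::nat) Y"
    then show "X = Y" by (metis Diff_insert_absorb PowD atLeastLessThan_iff not_one_le_zero subsetD)
  qed
  have compl: "\<And>K. ptrans K C i j = ptrans ({..<d} - K) C i j"
  proof -
    fix K
    have "ptrans ({..<d} - K) C i j = C (sw K j i) (sw K i j)"
      by (simp add: ptrans_sw sw_compl li lj)
    also have "\<dots> = ptrans K C i j" by (simp add: ptrans_sw) (rule sym)
    finally show "ptrans K C i j = ptrans ({..<d} - K) C i j" by simp
  qed
  have "(\<Sum>K\<in>insert 0 ` Pow ?A. ptrans K C i j) = (\<Sum>K\<in>Pow ?A. ptrans (insert 0 K) C i j)"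
    by (subst sum.reindex[OF inj]) (simp add: comp_def)
  also have "\<dots> = (\<Sum>K\<in>Pow ?A. ptrans (?A - K) C i j)"
  proof (rule sum.cong[OF refl])
    fix K assume "K \<in> Pow ?A"
    have "{..<d} - insert 0 K = ?A - K" by auto
    then show "ptrans (insert 0 K) C i j = ptrans (?A - K) C i j" using compl[of "insert 0 K"] by simp
  qed
  also have "\<dots> = (\<Sum>K\<in>Pow ?A. ptrans K C i j)"
    by (rule sum.reindex_bij_witness[of _ "\<lambda>K. ?A - K" "\<lambda>K. ?A - K"]) auto
  finally have h: "(\<Sum>K\<in>insert 0 ` Pow ?A. ptrans K C i j) = (\<Sum>K\<in>Pow ?A. ptrans K C i j)" .
  have "(\<Sum>K\<in>Pow {..<d}. ptrans K C i j) = (\<Sum>K\<in>Pow ?A. ptrans K C i j) + (\<Sum>K\<in>insert 0 ` Pow ?A. ptrans K C i j)"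
    unfolding P by (rule sum.union_disjoint) (use disj in auto)
  then show ?thesis using h by (simp only: mult_2)
qed

lemma PT_rank_le:
  fixes B :: "'b \<Rightarrow> 'a::field tmat"
  assumes fin: "finite I"
    and bz: "\<And>x. x \<in> I \<Longrightarrow> PT_basic n d (B x) \<or> (\<forall>i\<in>idx n d. \<forall>j\<in>idx n d. B x i j = 0)"
    and sm: "\<And>i j. i \<in> idx n d \<Longrightarrow> j \<in> idx n d \<Longrightarrow> M i j = (\<Sum>x\<in>I. B x i j)"
  shows "PT_rank n d M \<le> enat (card I)"
proof -
  define J where "J = {x\<in>I. PT_basic n d (B x)}"
  have fJ: "finite J" using fin by (simp add: J_def)
  obtain h where h: "bij_betw h {0..<card J} J" using ex_bij_betw_nat_finite[OF fJ] by blast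
  have 1: "\<forall>t<card J. PT_basic n d (B (h t))" using h by (auto simp: bij_betw_def J_def)
  have 2: "\<forall>i\<in>idx n d. \<forall>j\<in>idx n d. M i j = (\<Sum>t<card J. B (h t) i j)"
  proof (intro ballI)
    fix i j assume i: "i \<in> idx n d" and j: "j \<in> idx n d"
    have "M i j = (\<Sum>x\<in>I. B x i j)" using sm i j by blast
    also have "\<dots> = (\<Sum>x\<in>J. B x i j)"
      by (rule sum.mono_neutral_right[OF fin]) (use bz i j in \<open>auto simp: J_def\<close>)
    also have "\<dots> = (\<Sum>t<card J. B (h t) i j)"
      using sum.reindex_bij_betw[OF h, of "\<lambda>x. B x i j"] by (simp add: atLeast0LessThan)
    finally show "M i j = (\<Sum>t<card J. B (h t) i j)" .
  qed
  have "enat (card J) \<in> {enat r | r. \<exists>B :: nat \<Rightarrow> 'a tmat.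
     (\<forall>t<r. PT_basic n d (B t)) \<and>
     (\<forall>i\<in>idx n d. \<forall>j\<in>idx n d. M i j = (\<Sum>t<r. B t i j))}"
  proof -
    have "\<exists>B'::nat \<Rightarrow> 'a tmat. (\<forall>t<card J. PT_basic n d (B' t)) \<and>
       (\<forall>i\<in>idx n d. \<forall>j\<in>idx n d. M i j = (\<Sum>t<card J. B' t i j))"
      using 1 2 by (intro exI[of _ "\<lambda>t. B (h t)"]) simp
    then show ?thesis by blast
  qed
  then have "PT_rank n d M \<le> enat (card J)" unfolding PT_rank_def by (rule Inf_lower)
  also have "card J \<le> card I" using fin by (auto simp: J_def intro: card_mono)
  then have "enat (card J) \<le> enat (card I)" by simp
  finally show ?thesis .
qed

lemma basic_or_zero:
  fixes c :: "nat list \<Rightarrow> 'a::field"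
  assumes a: "a \<noteq> 0" and K: "K \<subseteq> {..<d}"
  shows "PT_basic n d (\<lambda>i j. a * ptrans K (\<lambda>i j. c i * c j) i j) \<or>
         (\<forall>i\<in>idx n d. \<forall>j\<in>idx n d. a * ptrans K (\<lambda>i j. c i * c j) i j = 0)"
proof (cases "\<exists>i0\<in>idx n d. c i0 \<noteq> 0")
  case False
  then show ?thesis by (auto simp: ptrans_sw sw_idx)
next
  case True
  then obtain i0 where i0: "i0 \<in> idx n d" "c i0 \<noteq> 0" by blast
  interpret V: vector_space "fscale :: 'a \<Rightarrow> (nat list \<Rightarrow> 'a) \<Rightarrow> _" by (rule vector_space_fscale)
  define v where "v = (\<lambda>i. if i \<in> idx n d then c i else 0)"
  have pt: "ptrans K (\<lambda>i j. a * ptrans K (\<lambda>i j. c i * c j) i j) i j = a * c i * c j"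
    if i: "i \<in> idx n d" and j: "j \<in> idx n d" for i j
  proof -
    have li: "length i = d" "length j = d" using i j by (auto simp: length_idx)
    then show ?thesis by (simp add: ptrans_sw sw_comp)
  qed
  have cols: "(\<lambda>j. (\<lambda>i. if i \<in> idx n d then ptrans K (\<lambda>i j. a * ptrans K (\<lambda>i j. c i * c j) i j) i j else 0)) ` idx n d
      = (\<lambda>j. fscale (a * c j) v) ` idx n d"
    by (rule image_cong[OF refl]) (auto simp: fun_eq_iff pt fscale_def v_def)
  have le: "V.dim ((\<lambda>j. fscale (a * c j) v) ` idx n d) \<le> 1"
  proof -
    have "(\<lambda>j. fscale (a * c j) v) ` idx n d \<subseteq> V.span {v}"
      by (auto intro: V.span_scale V.span_base)
    then have "V.dim ((\<lambda>j. fscale (a * c j) v) ` idx n d) \<le> card {v}" by (rule V.dim_le_card) simp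
    then show ?thesis by simp
  qed
  have ge: "V.dim ((\<lambda>j. fscale (a * c j) v) ` idx n d) \<noteq> 0"
  proof
    assume "V.dim ((\<lambda>j. fscale (a * c j) v) ` idx n d) = 0"
    moreover obtain Bs where Bs: "Bs \<subseteq> (\<lambda>j. fscale (a * c j) v) ` idx n d" "V.independent Bs"
      "(\<lambda>j. fscale (a * c j) v) ` idx n d \<subseteq> V.span Bs" "card Bs = V.dim ((\<lambda>j. fscale (a * c j) v) ` idx n d)"
      by (rule V.basis_exists)
    moreover have "finite Bs" using Bs(1) finite_imageI[OF finite_idx] by (rule finite_subset)
    ultimately have "Bs = {}" by simp
    then have "(\<lambda>j. fscale (a * c j) v) ` idx n d \<subseteq> {0}" using Bs(3) by simp
    moreover have "fscale (a * c i0) v \<in> (\<lambda>j. fscale (a * c j) v) ` idx n d" using i0 by blast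
    ultimately have "fscale (a * c i0) v = 0" by blast
    then have "fscale (a * c i0) v i0 = 0" by (simp only: zero_fun_def)
    then show False using i0 a by (simp add: fscale_def v_def)
  qed
  have "mrank n d (ptrans K (\<lambda>i j. a * ptrans K (\<lambda>i j. c i * c j) i j)) = 1"
    unfolding mrank_def cols using le ge by simp
  then show ?thesis unfolding PT_basic_def using K by blast
qed

lemma sq_form:
  "(\<Sum>i\<in>idx n d. Const (c i) * (\<Prod>k<d. Var k (i ! k)))^2 = QM n d (\<lambda>i j. c i * c j :: 'a::comm_ring_1)"
proof -
  have "(\<Sum>i\<in>idx n d. Const (c i) * (\<Prod>k<d. Var k (i ! k)))^2 =
     (\<Sum>i\<in>idx n d. \<Sum>j\<in>idx n d. (Const (c i) * (\<Prod>k<d. Var k (i ! k))) * (Const (c j) * (\<Prod>k<d. Var k (j ! k))))"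
    by (simp add: power2_eq_square sum_product)
  also have "\<dots> = QM n d (\<lambda>i j. c i * c j)"
    unfolding QM_def
  proof (rule sum.cong[OF refl], rule sum.cong[OF refl])
    fix i j
    have "(Const (c i) * (\<Prod>k<d. Var k (i ! k))) * (Const (c j) * (\<Prod>k<d. Var k (j ! k))) =
       (Const (c i) * Const (c j)) * ((\<Prod>k<d. Var k (i ! k)) * (\<Prod>k<d. Var k (j ! k)))"
      by (simp add: mult_ac)
    also have "\<dots> = Const (c i * c j) * (\<Prod>k<d. Var k (i ! k) * Var k (j ! k))"
      by (simp add: Const_def mult_single prod.distrib)
    finally show "(Const (c i) * (\<Prod>k<d. Var k (i ! k))) * (Const (c j) * (\<Prod>k<d. Var k (j ! k))) =
       Const (c i * c j) * (\<Prod>k<d. Var k (i ! k) * Var k (j ! k))" .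
  qed
  finally show ?thesis .
qed

theorem lemma3p15:
  fixes M :: "'a::field tmat" and n d :: nat
  assumes "CHAR('a) \<noteq> 2"
    and "d \<ge> 1"
    and "fully_symmetric n d M"
  shows "PT_rank n d M \<le> enat (2 ^ (d - 1)) * SoS n d (QM n d M)"
proof -
  have two: "(2::'a) \<noteq> 0" using assms(1) by (rule two_ne_zero)
  define SS where "SS = {enat s | s. \<exists>g :: nat \<Rightarrow> 'a mpoly.
     (\<forall>t<s. multilinear_form n d (g t)) \<and> QM n d M = (\<Sum>t<s. (g t)\<^sup>2)}"
  have SoS_eq: "SoS n d (QM n d M) = Inf SS" unfolding SoS_def SS_def ..
  show ?thesis
  proof (cases "SS = {}")
    case True
    then have "SoS n d (QM n d M) = \<infinity>" unfolding SoS_eq by (simp add: Inf_enat_def)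
    then show ?thesis by simp
  next
    case False
    then have "Inf SS \<in> SS" unfolding Inf_enat_def by (auto intro: LeastI)
    then obtain s g where sos: "SoS n d (QM n d M) = enat s"
      and ml: "\<forall>t<s. multilinear_form n d (g t)" and QMg: "QM n d M = (\<Sum>t<s. (g t)\<^sup>2)"
      unfolding SoS_eq SS_def by blast
    have "\<forall>t. \<exists>ct. t < s \<longrightarrow> g t = (\<Sum>i\<in>idx n d. Const (ct i) * (\<Prod>k<d. Var k (i ! k)))"
      using ml unfolding multilinear_form_def by blast
    then have "\<exists>c. \<forall>t. t < s \<longrightarrow> g t = (\<Sum>i\<in>idx n d. Const (c t i) * (\<Prod>k<d. Var k (i ! k)))"
      by (rule choice)
    then obtain c where c: "\<forall>t. t < s \<longrightarrow> g t = (\<Sum>i\<in>idx n d. Const (c t i) * (\<Prod>k<d. Var k (i ! k)))"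
      by blast
    define C where "C = (\<lambda>t i j. c t i * c t j)"
    define N where "N = (\<lambda>i j. \<Sum>t<s. C t i j)"
    have QN: "QM n d M = QM n d N"
    proof -
      have "QM n d M = (\<Sum>t<s. QM n d (C t))"
        unfolding QMg C_def by (rule sum.cong[OF refl]) (simp add: c sq_form)
      also have "\<dots> = QM n d N" unfolding N_def by (rule QM_sum[symmetric]) simp
      finally show ?thesis .
    qed
    let ?A = "{1..<d}"
    define q where "q = (2::'a) ^ (d - 1)"
    have q0: "q \<noteq> 0" using two by (simp add: q_def)
    define B where "B = (\<lambda>x i j. inverse q * ptrans (snd x) (C (fst x)) i j)"
    have main: "M i j = (\<Sum>x\<in>{..<s} \<times> Pow ?A. B x i j)" if i: "i \<in> idx n d" and j: "j \<in> idx n d" for i j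
    proof -
      have li: "length i = d" "length j = d" using i j by (auto simp: length_idx)
      have "of_nat (2^d) * M i j = (\<Sum>K\<in>Pow {..<d}. ptrans K N i j)"
        by (rule sym_formula[OF assms(3) QN two i j])
      also have "\<dots> = (\<Sum>K\<in>Pow {..<d}. \<Sum>t<s. ptrans K (C t) i j)"
        by (simp add: N_def ptrans_sw)
      also have "\<dots> = (\<Sum>t<s. \<Sum>K\<in>Pow {..<d}. ptrans K (C t) i j)"
        by (rule sum.swap)
      also have "\<dots> = (\<Sum>t<s. 2 * (\<Sum>K\<in>Pow ?A. ptrans K (C t) i j))"
        by (rule sum.cong[OF refl], rule halve) (use assms(2) in \<open>auto simp: C_def li\<close>)
      finally have eq: "of_nat (2^d) * M i j = (\<Sum>t<s. 2 * (\<Sum>K\<in>Pow ?A. ptrans K (C t) i j))" .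
      have p2: "(of_nat (2^d) :: 'a) = 2 * q"
      proof -
        obtain d' where "d = Suc d'" using assms(2) by (cases d) auto
        then show ?thesis by (simp add: q_def)
      qed
      have "2 * q * M i j = 2 * (\<Sum>t<s. \<Sum>K\<in>Pow ?A. ptrans K (C t) i j)"
        using eq by (simp only: p2 sum_distrib_left)
      then have "q * M i j = (\<Sum>t<s. \<Sum>K\<in>Pow ?A. ptrans K (C t) i j)"
        using two by simp
      then have "M i j = inverse q * (\<Sum>t<s. \<Sum>K\<in>Pow ?A. ptrans K (C t) i j)"
        using q0 by (simp add: field_simps)
      also have "\<dots> = (\<Sum>t<s. \<Sum>K\<in>Pow ?A. inverse q * ptrans K (C t) i j)"
        by (simp add: sum_distrib_left)
      also have "\<dots> = (\<Sum>x\<in>{..<s} \<times> Pow ?A. B x i j)"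
        by (simp add: B_def sum.cartesian_product case_prod_beta)
      finally show ?thesis .
    qed
    have bz: "PT_basic n d (B x) \<or> (\<forall>i\<in>idx n d. \<forall>j\<in>idx n d. B x i j = 0)"
      if x: "x \<in> {..<s} \<times> Pow ?A" for x
    proof -
      obtain t K where tK: "x = (t, K)" by (cases x)
      have K: "K \<subseteq> {..<d}" using x tK by auto
      have Bx: "B x = (\<lambda>i j. inverse q * ptrans K (\<lambda>i j. c t i * c t j) i j)"
        by (simp add: B_def tK C_def)
      show ?thesis unfolding Bx by (rule basic_or_zero[OF _ K]) (simp add: q0)
    qed
    have "PT_rank n d M \<le> enat (card ({..<s} \<times> Pow ?A))"
      by (rule PT_rank_le[OF _ bz main]) auto
    also have "card ({..<s} \<times> Pow ?A) = 2 ^ (d - 1) * s"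
      by (simp add: card_cartesian_product card_Pow)
    finally show ?thesis by (simp add: sos)
  qed
qed

end
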